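(* Fix a substructure collection $\mathcal{H}$. Let $C^V$ be the set of functions (on graphs) that can be expressed by a GSN-v with arbitrary depth and width using structural features from $\mathcal{H}$, and $C^E$ the set of functions that can be expressed by a GSN-e with arbitrary depth and width using structural features from $\mathcal{H}$. Then $C^E\supseteq C^V$, i.e. GSN-e is at least as expressive as GSN-v.
   Context: Graphs are finite, simple, with possible vertex features and edge features $\mathbf{e}_{u,v}$. For a (connected) graph $H$, its vertex orbits $O^V_{H,1},\dots,O^V_{H,d_H}$ are the classes of $\mathcal{V}_H$ under $\mathrm{Aut}(H)$; its edge orbits are the classes of ordered pairs $(u,v)$ with $\{u,v\}\in\mathcal{E}_H$ under $(u,v)\mapsto(g(u),g(v))$, $g\in\mathrm{Aut}(H)$. For a graph $G$: $x^V_{H,i}(v)=|\{G_S\subseteq G: G_S\simeq H,\ v\in\mathcal{V}_{G_S},\ f(v)\in O^V_{H,i}\}|$ and $x^E_{H,i}(u,v)=|\{G_S\subseteq G: G_S\simeq H,\ (u,v)\in\mathcal{E}_{G_S},\ (f(u),f(v))\in O^E_{H,i}\}|$, where $f:G_S\to H$ is any isomorphism. $\mathbf{x}^V_v$ and $\mathbf{x}^E_{u,v}$ are the concatenations over $H\in\mathcal{H}$ and all orbits. A GSN layer: $\mathbf{h}^{t+1}_v=\mathrm{UP}^{t+1}(\mathbf{h}^t_v,\mathbf{m}^{t+1}_v)$; for GSN-v, $\mathbf{m}^{t+1}_v=M^{t+1}(\{\!\{(\mathbf{h}^t_v,\mathbf{h}^t_u,\mathbf{x}^V_v,\mathbf{x}^V_u,\mathbf{e}_{u,v})\}\!\}_{u\in\mathcal{N}(v)})$;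 for GSN-e, $\mathbf{m}^{t+1}_v=M^{t+1}(\{\!\{(\mathbf{h}^t_v,\mathbf{h}^t_u,\mathbf{x}^E_{u,v},\mathbf{e}_{u,v})\}\!\}_{u\in\mathcal{N}(v)})$, where $\mathrm{UP}^{t+1}$ is an arbitrary function and $M^{t+1}$ an arbitrary function on multisets; $\mathbf{h}^0_v$ are input vertex features, and the network output is obtained from the final vertex states (with a readout for graph-level functions). *)

theory Defs
  imports Complex_Main "HOL-Library.Multiset"
begin

text \<open>Simple graph skeletons (used for substructures H and for subgraphs G_S):
  a vertex set and a symmetric, irreflexive set of ordered pairs (each undirected
  edge {u,v} appears as both (u,v) and (v,u)).\<close>
record pattern =
  pverts :: "nat set"
  pedges :: "(nat \<times> nat) set"

definition wf_pattern :: "pattern \<Rightarrow> bool" where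
  "wf_pattern P \<longleftrightarrow> finite (pverts P) \<and> pedges P \<subseteq> pverts P \<times> pverts P
     \<and> sym (pedges P) \<and> irrefl (pedges P)"

definition connected_pattern :: "pattern \<Rightarrow> bool" where
  "connected_pattern P \<longleftrightarrow> wf_pattern P \<and> pverts P \<noteq> {}
     \<and> (\<forall>u\<in>pverts P. \<forall>w\<in>pverts P. (u, w) \<in> (pedges P)\<^sup>*)"

record graph =
  verts :: "nat set"
  edges :: "(nat \<times> nat) set"
  vfeat :: "nat \<Rightarrow> real list"
  efeat :: "nat \<Rightarrow> nat \<Rightarrow> real list"

definition skel :: "graph \<Rightarrow> pattern" where
  "skel G = \<lparr>pverts = verts G, pedges = edges G\<rparr>"

definition wf_graph :: "graph \<Rightarrow> bool" where
  "wf_graph G \<longleftrightarrow> wf_pattern (skel G)"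

definition nbrs :: "graph \<Rightarrow> nat \<Rightarrow> nat set" where
  "nbrs G v = {u. (v, u) \<in> edges G}"

definition is_iso :: "(nat \<Rightarrow> nat) \<Rightarrow> pattern \<Rightarrow> pattern \<Rightarrow> bool" where
  "is_iso f P Q \<longleftrightarrow> bij_betw f (pverts P) (pverts Q)
     \<and> (\<forall>u\<in>pverts P. \<forall>w\<in>pverts P. (u, w) \<in> pedges P \<longleftrightarrow> (f u, f w) \<in> pedges Q)"

definition isomorphic :: "pattern \<Rightarrow> pattern \<Rightarrow> bool" where
  "isomorphic P Q \<longleftrightarrow> (\<exists>f. is_iso f P Q)"

definition Aut :: "pattern \<Rightarrow> (nat \<Rightarrow> nat) set" where
  "Aut H = {g. is_iso g H H}"

definition vorbits :: "pattern \<Rightarrow> nat set set" where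
  "vorbits H = {{g x | g. g \<in> Aut H} | x. x \<in> pverts H}"

definition eorbits :: "pattern \<Rightarrow> (nat \<times> nat) set set" where
  "eorbits H = {{(g u, g w) | g. g \<in> Aut H} | u w. (u, w) \<in> pedges H}"

text \<open>(Not necessarily induced) subgraphs of G.\<close>
definition is_subgraph :: "pattern \<Rightarrow> graph \<Rightarrow> bool" where
  "is_subgraph S G \<longleftrightarrow> wf_pattern S \<and> pverts S \<subseteq> verts G \<and> pedges S \<subseteq> edges G"

text \<open>Vertex structural feature x^V_v, represented as the function
  (H, Ob) \<mapsto> x^V_{H,Ob}(v) for H in the collection and Ob a vertex orbit of H
  (and 0 elsewhere); this carries exactly the information of the concatenation.\<close>
definition xV :: "pattern set \<Rightarrow> graph \<Rightarrow> nat \<Rightarrow> pattern \<Rightarrow> nat set \<Rightarrow> nat" where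
  "xV \<H> G v = (\<lambda>H Ob. if H \<in> \<H> \<and> Ob \<in> vorbits H then
      card {S. is_subgraph S G \<and> isomorphic S H \<and> v \<in> pverts S
               \<and> (\<exists>f. is_iso f S H \<and> f v \<in> Ob)}
    else 0)"

definition xE :: "pattern set \<Rightarrow> graph \<Rightarrow> nat \<Rightarrow> nat \<Rightarrow> pattern \<Rightarrow> (nat \<times> nat) set \<Rightarrow> nat" where
  "xE \<H> G u v = (\<lambda>H Ob. if H \<in> \<H> \<and> Ob \<in> eorbits H then
      card {S. is_subgraph S G \<and> isomorphic S H \<and> (u, v) \<in> pedges S
               \<and> (\<exists>f. is_iso f S H \<and> (f u, f v) \<in> Ob)}
    else 0)"

type_synonym vfeatvec = "pattern \<Rightarrow> nat set \<Rightarrow> nat"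
type_synonym efeatvec = "pattern \<Rightarrow> (nat \<times> nat) set \<Rightarrow> nat"

text \<open>Message functions M^{t} (arbitrary functions on multisets) and update
  functions UP^{t} (arbitrary), indexed by the layer t \<ge> 1. States are real
  vectors of arbitrary (layer-dependent) width.\<close>
type_synonym msgV = "nat \<Rightarrow> (real list \<times> real list \<times> vfeatvec \<times> vfeatvec \<times> real list) multiset \<Rightarrow> real list"
type_synonym msgE = "nat \<Rightarrow> (real list \<times> real list \<times> efeatvec \<times> real list) multiset \<Rightarrow> real list"
type_synonym upd = "nat \<Rightarrow> real list \<Rightarrow> real list \<Rightarrow> real list"

fun gsnv_state :: "pattern set \<Rightarrow> msgV \<Rightarrow> upd \<Rightarrow> graph \<Rightarrow> nat \<Rightarrow> nat \<Rightarrow> real list" where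
  "gsnv_state \<H> M UP G 0 v = vfeat G v"
| "gsnv_state \<H> M UP G (Suc t) v =
     UP (Suc t) (gsnv_state \<H> M UP G t v)
       (M (Suc t) (image_mset (\<lambda>u. (gsnv_state \<H> M UP G t v, gsnv_state \<H> M UP G t u,
                                     xV \<H> G v, xV \<H> G u, efeat G u v))
                     (mset_set (nbrs G v))))"

fun gsne_state :: "pattern set \<Rightarrow> msgE \<Rightarrow> upd \<Rightarrow> graph \<Rightarrow> nat \<Rightarrow> nat \<Rightarrow> real list" where
  "gsne_state \<H> M UP G 0 v = vfeat G v"
| "gsne_state \<H> M UP G (Suc t) v =
     UP (Suc t) (gsne_state \<H> M UP G t v)
       (M (Suc t) (image_mset (\<lambda>u. (gsne_state \<H> M UP G t v, gsne_state \<H> M UP G t u,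
                                     xE \<H> G u v, efeat G u v))
                     (mset_set (nbrs G v))))"

definition CV_vertex :: "pattern set \<Rightarrow> (graph \<Rightarrow> nat \<Rightarrow> real list) set" where
  "CV_vertex \<H> = {F. \<exists>T M UP. \<forall>G. wf_graph G \<longrightarrow>
      (\<forall>v\<in>verts G. F G v = gsnv_state \<H> M UP G T v)}"

definition CE_vertex :: "pattern set \<Rightarrow> (graph \<Rightarrow> nat \<Rightarrow> real list) set" where
  "CE_vertex \<H> = {F. \<exists>T M UP. \<forall>G. wf_graph G \<longrightarrow>
      (\<forall>v\<in>verts G. F G v = gsne_state \<H> M UP G T v)}"

definition CV_graph :: "pattern set \<Rightarrow> (graph \<Rightarrow> real list) set" where
  "CV_graph \<H> = {F. \<exists>T M UP R. \<forall>G. wf_graph G \<longrightarrow>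
      F G = R (image_mset (gsnv_state \<H> M UP G T) (mset_set (verts G)))}"

definition CE_graph :: "pattern set \<Rightarrow> (graph \<Rightarrow> real list) set" where
  "CE_graph \<H> = {F. \<exists>T M UP R. \<forall>G. wf_graph G \<longrightarrow>
      F G = R (image_mset (gsne_state \<H> M UP G T) (mset_set (verts G)))}"

definition substructure_collection :: "pattern set \<Rightarrow> bool" where
  "substructure_collection \<H> \<longleftrightarrow> finite \<H> \<and> (\<forall>H\<in>\<H>. connected_pattern H)"

end

theory Submission
  imports Defs
begin

lemma iso_in: "is_iso f P Q \<Longrightarrow> x \<in> pverts P \<Longrightarrow> f x \<in> pverts Q"
  unfolding is_iso_def by (meson bij_betw_apply)

lemma iso_id: "is_iso id H H"
  unfolding is_iso_def by auto

lemma iso_comp: "is_iso f P Q \<Longrightarrow> is_iso g Q R \<Longrightarrow> is_iso (g \<circ> f) P R"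
  unfolding is_iso_def
  by (auto intro: bij_betw_trans simp: bij_betw_apply)

lemma iso_inv: assumes "is_iso f P Q" shows "is_iso (inv_into (pverts P) f) Q P"
proof -
  have b: "bij_betw f (pverts P) (pverts Q)" and e: "\<forall>u\<in>pverts P. \<forall>w\<in>pverts P. (u, w) \<in> pedges P \<longleftrightarrow> (f u, f w) \<in> pedges Q"
    using assms unfolding is_iso_def by auto
  have "bij_betw (inv_into (pverts P) f) (pverts Q) (pverts P)" using b by (rule bij_betw_inv_into)
  moreover have "\<forall>a\<in>pverts Q. \<forall>c\<in>pverts Q. (a, c) \<in> pedges Q \<longleftrightarrow> (inv_into (pverts P) f a, inv_into (pverts P) f c) \<in> pedges P"
  proof (intro ballI)
    fix a c assume a: "a \<in> pverts Q" and c: "c \<in> pverts Q"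
    have "a = f (inv_into (pverts P) f a)" "c = f (inv_into (pverts P) f c)"
      using a c b by (auto simp: bij_betw_def f_inv_into_f)
    moreover have "inv_into (pverts P) f a \<in> pverts P" "inv_into (pverts P) f c \<in> pverts P"
      using a c b by (auto simp: bij_betw_def inv_into_into)
    ultimately show "(a, c) \<in> pedges Q \<longleftrightarrow> (inv_into (pverts P) f a, inv_into (pverts P) f c) \<in> pedges P"
      using e by metis
  qed
  ultimately show ?thesis unfolding is_iso_def by auto
qed

lemma two_isos: assumes "is_iso f S H" "is_iso g S H"
  shows "\<exists>h\<in>Aut H. \<forall>x\<in>pverts S. g x = h (f x)"
proof -
  let ?h = "g \<circ> inv_into (pverts S) f"
  have "is_iso ?h H H" using iso_comp[OF iso_inv[OF assms(1)] assms(2)] .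
  moreover have "\<forall>x\<in>pverts S. g x = ?h (f x)"
    using assms(1) unfolding is_iso_def by (auto simp: bij_betw_def)
  ultimately show ?thesis unfolding Aut_def by blast
qed

definition vorb :: "pattern \<Rightarrow> nat \<Rightarrow> nat set" where
  "vorb H x = {g x | g. g \<in> Aut H}"
definition eorb :: "pattern \<Rightarrow> nat \<Rightarrow> nat \<Rightarrow> (nat \<times> nat) set" where
  "eorb H a b = {(g a, g b) | g. g \<in> Aut H}"

lemma vorbits_eq: "vorbits H = vorb H ` pverts H"
  unfolding vorbits_def vorb_def by auto
lemma eorbits_eq: "eorbits H = (\<lambda>(a,b). eorb H a b) ` pedges H"
  unfolding eorbits_def eorb_def by auto

lemma vorb_self: "x \<in> vorb H x"
  unfolding vorb_def Aut_def using iso_id by (metis (mono_tags, lifting) id_apply mem_Collect_eq)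
lemma eorb_self: "(a, b) \<in> eorb H a b"
  unfolding eorb_def Aut_def using iso_id by (metis (mono_tags, lifting) id_apply mem_Collect_eq)

lemma Aut_comp: "g \<in> Aut H \<Longrightarrow> k \<in> Aut H \<Longrightarrow> k \<circ> g \<in> Aut H"
  unfolding Aut_def using iso_comp by blast
lemma Aut_inv: "g \<in> Aut H \<Longrightarrow> inv_into (pverts H) g \<in> Aut H"
  unfolding Aut_def using iso_inv by blast
lemma Aut_invl: "g \<in> Aut H \<Longrightarrow> x \<in> pverts H \<Longrightarrow> inv_into (pverts H) g (g x) = x"
  unfolding Aut_def is_iso_def by (auto simp: bij_betw_def)

lemma vorb_eq: assumes "g \<in> Aut H" "x \<in> pverts H" shows "vorb H (g x) = vorb H x"
proof
  show "vorb H (g x) \<subseteq> vorb H x" unfolding vorb_def using Aut_comp[OF assms(1)]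
    by (smt (verit, best) Collect_mono_iff comp_apply)
  show "vorb H x \<subseteq> vorb H (g x)"
  proof
    fix y assume "y \<in> vorb H x"
    then obtain k where k: "k \<in> Aut H" "y = k x" unfolding vorb_def by auto
    have "y = (k \<circ> inv_into (pverts H) g) (g x)" using k Aut_invl[OF assms] by simp
    moreover have "k \<circ> inv_into (pverts H) g \<in> Aut H" using Aut_comp Aut_inv assms k by blast
    ultimately show "y \<in> vorb H (g x)" unfolding vorb_def by blast
  qed
qed

lemma eorb_eq: assumes "g \<in> Aut H" "a \<in> pverts H" "b \<in> pverts H"
  shows "eorb H (g a) (g b) = eorb H a b"
proof
  show "eorb H (g a) (g b) \<subseteq> eorb H a b" unfolding eorb_def using Aut_comp[OF assms(1)]
    by (smt (verit, best) Collect_mono_iff comp_apply)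
  show "eorb H a b \<subseteq> eorb H (g a) (g b)"
  proof
    fix y assume "y \<in> eorb H a b"
    then obtain k where k: "k \<in> Aut H" "y = (k a, k b)" unfolding eorb_def by auto
    have "y = ((k \<circ> inv_into (pverts H) g) (g a), (k \<circ> inv_into (pverts H) g) (g b))"
      using k Aut_invl[OF assms(1,2)] Aut_invl[OF assms(1,3)] by simp
    moreover have "k \<circ> inv_into (pverts H) g \<in> Aut H" using Aut_comp Aut_inv assms k by blast
    ultimately show "y \<in> eorb H (g a) (g b)" unfolding eorb_def by blast
  qed
qed

lemma Aut_in: "g \<in> Aut H \<Longrightarrow> x \<in> pverts H \<Longrightarrow> g x \<in> pverts H"
  unfolding Aut_def using iso_in by blast

lemma vorb_mem: "y \<in> vorb H x \<Longrightarrow> x \<in> pverts H \<Longrightarrow> vorb H y = vorb H x"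
  unfolding vorb_def using vorb_eq[unfolded vorb_def] by blast

lemma eorb_mem: "(p, q) \<in> eorb H a b \<Longrightarrow> a \<in> pverts H \<Longrightarrow> b \<in> pverts H \<Longrightarrow> eorb H p q = eorb H a b"
  unfolding eorb_def using eorb_eq[unfolded eorb_def] by blast

lemma eorb_vorb: "(p, q) \<in> eorb H a b \<Longrightarrow> b \<in> pverts H \<Longrightarrow> vorb H q = vorb H b"
  unfolding eorb_def using vorb_eq by blast


definition deg :: "pattern \<Rightarrow> nat \<Rightarrow> nat" where
  "deg H b = card {a. (a, b) \<in> pedges H}"
definition dOb :: "pattern \<Rightarrow> nat set \<Rightarrow> nat" where
  "dOb H Ob = deg H (SOME b. b \<in> Ob)"
definition Aset where
  "Aset G H Ob v = {S. is_subgraph S G \<and> isomorphic S H \<and> v \<in> pverts S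
               \<and> (\<exists>f. is_iso f S H \<and> f v \<in> Ob)}"
definition Bset where
  "Bset G H Oe u v = {S. is_subgraph S G \<and> isomorphic S H \<and> (u, v) \<in> pedges S
               \<and> (\<exists>f. is_iso f S H \<and> (f u, f v) \<in> Oe)}"
definition EOb where
  "EOb H Ob = {Oe\<in>eorbits H. \<exists>a b. (a,b)\<in>Oe \<and> b\<in>Ob}"

lemma wf_edges: "wf_pattern P \<Longrightarrow> (u, v) \<in> pedges P \<Longrightarrow> u \<in> pverts P \<and> v \<in> pverts P"
  unfolding wf_pattern_def by auto

lemma iso_deg: assumes "is_iso f S H" "wf_pattern S" "wf_pattern H" "v \<in> pverts S"
  shows "card {u. (u, v) \<in> pedges S} = deg H (f v)"
proof -
  have b: "bij_betw f (pverts S) (pverts H)" and e: "\<forall>u\<in>pverts S. \<forall>w\<in>pverts S. (u, w) \<in> pedges S \<longleftrightarrow> (f u, f w) \<in> pedges H"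
    using assms unfolding is_iso_def by auto
  have "bij_betw f {u. (u, v) \<in> pedges S} {a. (a, f v) \<in> pedges H}"
    unfolding bij_betw_def
  proof
    show "inj_on f {u. (u, v) \<in> pedges S}"
      using b wf_edges[OF assms(2)] unfolding bij_betw_def inj_on_def by blast
    show "f ` {u. (u, v) \<in> pedges S} = {a. (a, f v) \<in> pedges H}"
    proof (intro equalityI subsetI)
      fix a assume "a \<in> f ` {u. (u, v) \<in> pedges S}"
      then show "a \<in> {a. (a, f v) \<in> pedges H}" using e wf_edges[OF assms(2)] by blast
    next
      fix a assume a: "a \<in> {a. (a, f v) \<in> pedges H}"
      then have "a \<in> pverts H" using wf_edges[OF assms(3)] by blast
      then obtain u where "u \<in> pverts S" "a = f u" using b unfolding bij_betw_def by blast
      then show "a \<in> f ` {u. (u, v) \<in> pedges S}" using a e assms(4) by blast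
    qed
  qed
  then show ?thesis unfolding deg_def by (rule bij_betw_same_card)
qed

lemma Aut_deg: "g \<in> Aut H \<Longrightarrow> wf_pattern H \<Longrightarrow> x \<in> pverts H \<Longrightarrow> deg H (g x) = deg H x"
  using iso_deg[of g H H x] unfolding Aut_def deg_def by auto

lemma vorbits_pverts: "Ob \<in> vorbits H \<Longrightarrow> Ob \<subseteq> pverts H"
  unfolding vorbits_eq vorb_def using Aut_in by blast

lemma dOb_eq: assumes "Ob \<in> vorbits H" "wf_pattern H" "y \<in> Ob"
  shows "dOb H Ob = deg H y"
proof -
  obtain x where x: "x \<in> pverts H" "Ob = vorb H x" using assms(1) vorbits_eq by auto
  have "(SOME b. b \<in> Ob) \<in> Ob" using assms(3) by (rule someI)
  then obtain g where g: "g \<in> Aut H" "(SOME b. b \<in> Ob) = g x" using x unfolding vorb_def by auto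
  obtain k where k: "k \<in> Aut H" "y = k x" using x assms(3) unfolding vorb_def by auto
  show ?thesis unfolding dOb_def using g k Aut_deg assms(2) x(1) by metis
qed

lemma finite_subgraphs: assumes "wf_graph G" shows "finite {S. is_subgraph S G}"
proof -
  have fv: "finite (verts G)" and fe: "finite (edges G)"
    using assms unfolding wf_graph_def wf_pattern_def skel_def
    by (auto intro: finite_subset[of _ "verts G \<times> verts G"])
  have "{S. is_subgraph S G} \<subseteq> (\<lambda>(a,b). \<lparr>pverts=a, pedges=b\<rparr>) ` (Pow (verts G) \<times> Pow (edges G))"
  proof
    fix S assume "S \<in> {S. is_subgraph S G}"
    then have "S = (\<lambda>(a,b). \<lparr>pverts=a, pedges=b\<rparr>) (pverts S, pedges S)" "(pverts S, pedges S) \<in> Pow (verts G) \<times> Pow (edges G)"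
      unfolding is_subgraph_def by auto
    then show "S \<in> (\<lambda>(a,b). \<lparr>pverts=a, pedges=b\<rparr>) ` (Pow (verts G) \<times> Pow (edges G))" by blast
  qed
  then show ?thesis using fv fe by (meson finite_Pow_iff finite_SigmaI finite_imageI finite_subset)
qed

lemma B_sub_A: assumes "S \<in> Bset G H Oe u v" "Oe \<in> EOb H Ob" "Ob \<in> vorbits H" "wf_pattern H"
  shows "S \<in> Aset G H Ob v"
proof -
  obtain g where g: "is_iso g S H" "(g u, g v) \<in> Oe" and sS: "is_subgraph S G" "isomorphic S H" "(u,v) \<in> pedges S"
    using assms(1) unfolding Bset_def by auto
  have vS: "v \<in> pverts S" using sS wf_edges unfolding is_subgraph_def by blast
  obtain a0 b0 where ab0: "(a0, b0) \<in> pedges H" "Oe = eorb H a0 b0" using assms(2) unfolding EOb_def eorbits_eq by auto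
  have b0: "b0 \<in> pverts H" using ab0 wf_edges assms(4) by blast
  obtain a b where ab: "(a,b) \<in> Oe" "b \<in> Ob" using assms(2) unfolding EOb_def by auto
  obtain x0 where x0: "x0 \<in> pverts H" "Ob = vorb H x0" using assms(3) vorbits_eq by auto
  have "vorb H (g v) = vorb H b0" using eorb_vorb g(2) ab0 b0 by blast
  also have "\<dots> = vorb H b" using eorb_vorb ab ab0 b0 by metis
  also have "\<dots> = Ob" using vorb_mem ab x0 by metis
  finally have "g v \<in> Ob" using vorb_self by metis
  then show ?thesis unfolding Aset_def using sS vS g by blast
qed

lemma oneOe: assumes "S \<in> Aset G H Ob v" "is_iso f S H" "f v \<in> Ob" "wf_pattern H"
  shows "{Oe \<in> EOb H Ob. S \<in> Bset G H Oe u v} = (if (u,v) \<in> pedges S then {eorb H (f u) (f v)} else {})"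
proof (cases "(u,v) \<in> pedges S")
  case False then show ?thesis unfolding Bset_def by auto
next
  case True
  have sS: "is_subgraph S G" "isomorphic S H" using assms(1) unfolding Aset_def by auto
  have uvS: "u \<in> pverts S" "v \<in> pverts S" using True sS wf_edges unfolding is_subgraph_def by blast+
  have fe: "(f u, f v) \<in> pedges H" using assms(2) uvS True unfolding is_iso_def by blast
  have fuv: "f u \<in> pverts H" "f v \<in> pverts H" using fe wf_edges assms(4) by blast+
  have "{Oe \<in> EOb H Ob. S \<in> Bset G H Oe u v} = {eorb H (f u) (f v)}"
  proof (intro equalityI subsetI)
    fix Oe assume "Oe \<in> {Oe \<in> EOb H Ob. S \<in> Bset G H Oe u v}"
    then have Oe: "Oe \<in> eorbits H" "S \<in> Bset G H Oe u v" unfolding EOb_def by auto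
    obtain a b where ab: "(a,b) \<in> pedges H" "Oe = eorb H a b" using Oe(1) eorbits_eq by auto
    have abH: "a \<in> pverts H" "b \<in> pverts H" using ab wf_edges assms(4) by blast+
    obtain g where g: "is_iso g S H" "(g u, g v) \<in> Oe" using Oe(2) unfolding Bset_def by auto
    obtain h where h: "h \<in> Aut H" "\<forall>x\<in>pverts S. g x = h (f x)" using two_isos[OF assms(2) g(1)] by blast
    have "Oe = eorb H (g u) (g v)" using eorb_mem g(2) ab abH by metis
    also have "\<dots> = eorb H (f u) (f v)" using h uvS eorb_eq fuv by metis
    finally show "Oe \<in> {eorb H (f u) (f v)}" by simp
  next
    fix Oe assume "Oe \<in> {eorb H (f u) (f v)}"
    then have Oe: "Oe = eorb H (f u) (f v)" by simp
    have "Oe \<in> eorbits H" using Oe fe eorbits_eq by auto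
    moreover have "\<exists>a b. (a,b)\<in>Oe \<and> b\<in>Ob" using Oe eorb_self assms(3) by blast
    moreover have "S \<in> Bset G H Oe u v" unfolding Bset_def using sS True assms(2) Oe eorb_self by blast
    ultimately show "Oe \<in> {Oe \<in> EOb H Ob. S \<in> Bset G H Oe u v}" unfolding EOb_def by blast
  qed
  then show ?thesis using True by simp
qed


lemma wfG: "wf_graph G \<Longrightarrow> finite (verts G) \<and> edges G \<subseteq> verts G \<times> verts G \<and> sym (edges G) \<and> irrefl (edges G)"
  unfolding wf_graph_def wf_pattern_def skel_def by auto

lemma finite_nbrs: "wf_graph G \<Longrightarrow> finite (nbrs G v)"
  using wfG[of G] unfolding nbrs_def by (auto intro: finite_subset[of _ "verts G"])

lemma nbrs_verts: "wf_graph G \<Longrightarrow> u \<in> nbrs G v \<Longrightarrow> u \<in> verts G"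
  using wfG[of G] unfolding nbrs_def by auto

lemma count_main:
  assumes G: "wf_graph G" and H: "wf_pattern H" and Ob: "Ob \<in> vorbits H"
  shows "(\<Sum>u\<in>nbrs G v. \<Sum>Oe\<in>EOb H Ob. card (Bset G H Oe u v)) = dOb H Ob * card (Aset G H Ob v)"
proof -
  let ?N = "nbrs G v" and ?E = "EOb H Ob" and ?A = "Aset G H Ob v"
  have fN: "finite ?N" using finite_nbrs G by blast
  have "finite (pedges H)" using H unfolding wf_pattern_def
    by (auto intro: finite_subset[of _ "pverts H \<times> pverts H"])
  then have fE: "finite ?E" unfolding EOb_def eorbits_eq by simp
  have fA: "finite ?A" using finite_subgraphs[OF G] unfolding Aset_def by (auto intro: finite_subset)
  have "(\<Sum>u\<in>?N. \<Sum>Oe\<in>?E. card (Bset G H Oe u v)) = (\<Sum>u\<in>?N. \<Sum>Oe\<in>?E. \<Sum>S\<in>?A. of_bool (S \<in> Bset G H Oe u v))"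
  proof (intro sum.cong refl)
    fix u Oe assume "Oe \<in> ?E"
    then have "Bset G H Oe u v \<subseteq> ?A" using B_sub_A Ob H by blast
    then have "?A \<inter> {S. S \<in> Bset G H Oe u v} = Bset G H Oe u v" by blast
    then show "card (Bset G H Oe u v) = (\<Sum>S\<in>?A. of_bool (S \<in> Bset G H Oe u v))"
      using fA by (simp only: sum_of_bool_eq) simp
  qed
  also have "\<dots> = (\<Sum>S\<in>?A. \<Sum>u\<in>?N. \<Sum>Oe\<in>?E. of_bool (S \<in> Bset G H Oe u v))"
    by (subst sum.swap) (subst sum.swap, rule refl)
  also have "\<dots> = (\<Sum>S\<in>?A. dOb H Ob)"
  proof (rule sum.cong[OF refl])
    fix S assume S: "S \<in> ?A"
    then obtain f where f: "is_iso f S H" "f v \<in> Ob" and sS: "is_subgraph S G" "v \<in> pverts S"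
      unfolding Aset_def by auto
    have wS: "wf_pattern S" using sS is_subgraph_def by blast
    have "(\<Sum>u\<in>?N. \<Sum>Oe\<in>?E. (of_bool (S \<in> Bset G H Oe u v)::nat)) = (\<Sum>u\<in>?N. (of_bool ((u,v) \<in> pedges S)::nat))"
    proof (rule sum.cong[OF refl])
      fix u
      have "(\<Sum>Oe\<in>?E. of_bool (S \<in> Bset G H Oe u v)) = (card (?E \<inter> {Oe. S \<in> Bset G H Oe u v})::nat)"
        using fE by simp
      also have "?E \<inter> {Oe. S \<in> Bset G H Oe u v} = {Oe \<in> ?E. S \<in> Bset G H Oe u v}" by blast
      also have "card \<dots> = (of_bool ((u,v) \<in> pedges S) :: nat)" using oneOe[OF S f H] by simp
      finally show "(\<Sum>Oe\<in>?E. of_bool (S \<in> Bset G H Oe u v)) = (of_bool ((u,v) \<in> pedges S) :: nat)" .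
    qed
    also have "\<dots> = card (?N \<inter> {u. (u,v) \<in> pedges S})" using fN by simp
    also have "?N \<inter> {u. (u,v) \<in> pedges S} = {u. (u,v) \<in> pedges S}"
      using sS wfG[OF G] unfolding is_subgraph_def nbrs_def sym_def by blast
    also have "card {u. (u,v) \<in> pedges S} = deg H (f v)" using iso_deg[OF f(1) wS H sS(2)] .
    also have "\<dots> = dOb H Ob" using dOb_eq[OF Ob H f(2)] by simp
    finally show "(\<Sum>u\<in>?N. \<Sum>Oe\<in>?E. of_bool (S \<in> Bset G H Oe u v)) = dOb H Ob" .
  qed
  also have "\<dots> = dOb H Ob * card ?A" by simp
  finally show ?thesis .
qed

lemma single_vertex:
  assumes G: "wf_graph G" and v: "v \<in> verts G" and H: "connected_pattern H" and Ob: "Ob \<in> vorbits H"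
    and d: "dOb H Ob = 0"
  shows "card (Aset G H Ob v) = 1"
proof -
  have wH: "wf_pattern H" using H connected_pattern_def by blast
  obtain x where x: "x \<in> pverts H" "Ob = vorb H x" using Ob vorbits_eq by auto
  have xOb: "x \<in> Ob" using x vorb_self by metis
  have "deg H x = 0" using dOb_eq[OF Ob wH xOb] d by simp
  moreover have "finite {a. (a, x) \<in> pedges H}" using wH unfolding wf_pattern_def
    by (auto intro: finite_subset[of _ "pverts H"])
  ultimately have nox: "\<And>a. (a, x) \<notin> pedges H" unfolding deg_def by auto
  have PH: "pverts H = {x}"
  proof (intro equalityI subsetI)
    fix w assume w: "w \<in> pverts H"
    have "(x, w) \<in> (pedges H)\<^sup>*" using H x w unfolding connected_pattern_def by blast
    then show "w \<in> {x}"
    proof (cases rule: converse_rtranclE)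
      case (step c) then have "(c, x) \<in> pedges H" using wH unfolding wf_pattern_def sym_def by blast
      then show ?thesis using nox by blast
    qed simp
  qed (use x in simp)
  have EH: "pedges H = {}" using wH PH unfolding wf_pattern_def irrefl_def by auto
  let ?S = "\<lparr>pverts = {v}, pedges = {}\<rparr>"
  have "Aset G H Ob v = {?S}"
  proof (intro equalityI subsetI)
    fix S assume S: "S \<in> Aset G H Ob v"
    then obtain f where f: "is_iso f S H" and sS: "is_subgraph S G" "v \<in> pverts S" unfolding Aset_def by auto
    have "bij_betw f (pverts S) {x}" using f PH unfolding is_iso_def by simp
    then have "card (pverts S) = 1" by (simp add: bij_betw_same_card)
    then have pv: "pverts S = {v}" using sS(2) by (metis card_1_singletonE singletonD)
    then have pe: "pedges S = {}" using sS unfolding is_subgraph_def wf_pattern_def irrefl_def by auto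
    show "S \<in> {?S}" using pv pe by (simp add: pattern.equality)
  next
    fix S assume "S \<in> {?S}"
    then have S: "S = ?S" by simp
    have iso: "is_iso (\<lambda>_. x) ?S H" unfolding is_iso_def using PH EH by (simp add: bij_betw_def)
    have "is_subgraph ?S G" unfolding is_subgraph_def wf_pattern_def using v by (simp add: sym_def irrefl_def)
    then show "S \<in> Aset G H Ob v" unfolding Aset_def isomorphic_def using S iso xOb by fastforce
  qed
  then show ?thesis by simp
qed


definition ks :: "pattern set \<Rightarrow> (pattern \<times> nat set) list" where
  "ks \<H> = (SOME l. set l = Sigma \<H> vorbits)"
definition enc :: "(pattern \<times> nat set) list \<Rightarrow> vfeatvec \<Rightarrow> real list" where
  "enc l f = map (\<lambda>(H,Ob). real (f H Ob)) l"
definition dec :: "(pattern \<times> nat set) list \<Rightarrow> real list \<Rightarrow> vfeatvec" where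
  "dec l r = (\<lambda>H Ob. case map_of (zip l r) (H,Ob) of None \<Rightarrow> 0 | Some y \<Rightarrow> nat \<lfloor>y\<rfloor>)"

lemma ks_set: assumes "substructure_collection \<H>" shows "set (ks \<H>) = Sigma \<H> vorbits"
proof -
  have "finite (Sigma \<H> vorbits)"
    using assms unfolding substructure_collection_def connected_pattern_def wf_pattern_def
    by (auto simp: vorbits_eq intro!: finite_SigmaI)
  then show ?thesis unfolding ks_def by (metis (mono_tags) finite_list someI_ex)
qed

lemma dec_enc: assumes "\<And>H Ob. (H,Ob) \<notin> set l \<Longrightarrow> f H Ob = 0" shows "dec l (enc l f) = f"
proof (intro ext)
  fix H Ob
  have "enc l f = map (\<lambda>p. real (f (fst p) (snd p))) l" unfolding enc_def by (simp add: case_prod_beta)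
  then show "dec l (enc l f) H Ob = f H Ob" unfolding dec_def using assms[of H Ob]
    by (simp add: map_of_zip_map)
qed

lemma length_enc[simp]: "length (enc l f) = length l" unfolding enc_def by simp

lemma xV_zero: "set (ks \<H>) = Sigma \<H> vorbits \<Longrightarrow> (H,Ob) \<notin> set (ks \<H>) \<Longrightarrow> xV \<H> G v H Ob = 0"
  unfolding xV_def by auto

definition Dfun :: "pattern set \<Rightarrow> efeatvec multiset \<Rightarrow> vfeatvec" where
  "Dfun \<H> m = (\<lambda>H Ob. if H \<in> \<H> \<and> Ob \<in> vorbits H then
     (if dOb H Ob = 0 then 1 else sum_mset (image_mset (\<lambda>x. \<Sum>Oe\<in>EOb H Ob. x H Oe) m) div dOb H Ob)
     else 0)"

lemma xV_decode:
  assumes HH: "substructure_collection \<H>" and G: "wf_graph G" and v: "v \<in> verts G"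
  shows "xV \<H> G v = Dfun \<H> (image_mset (\<lambda>u. xE \<H> G u v) (mset_set (nbrs G v)))"
proof (intro ext)
  fix H Ob
  show "xV \<H> G v H Ob = Dfun \<H> (image_mset (\<lambda>u. xE \<H> G u v) (mset_set (nbrs G v))) H Ob"
  proof (cases "H \<in> \<H> \<and> Ob \<in> vorbits H")
    case False then show ?thesis unfolding xV_def Dfun_def by auto
  next
    case True
    have cH: "connected_pattern H" using HH True unfolding substructure_collection_def by blast
    then have wH: "wf_pattern H" unfolding connected_pattern_def by blast
    have xv: "xV \<H> G v H Ob = card (Aset G H Ob v)" unfolding xV_def Aset_def using True by simp
    show ?thesis
    proof (cases "dOb H Ob = 0")
      case True2: True
      then show ?thesis using xv single_vertex[OF G v cH _ True2] True unfolding Dfun_def by simp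
    next
      case False
      have "sum_mset (image_mset (\<lambda>x. \<Sum>Oe\<in>EOb H Ob. x H Oe) (image_mset (\<lambda>u. xE \<H> G u v) (mset_set (nbrs G v))))
          = (\<Sum>u\<in>nbrs G v. \<Sum>Oe\<in>EOb H Ob. xE \<H> G u v H Oe)"
        by (simp add: sum_unfold_sum_mset image_mset.compositionality comp_def)
      also have "\<dots> = (\<Sum>u\<in>nbrs G v. \<Sum>Oe\<in>EOb H Ob. card (Bset G H Oe u v))"
        by (intro sum.cong refl) (use True in \<open>auto simp: xE_def Bset_def EOb_def\<close>)
      also have "\<dots> = dOb H Ob * card (Aset G H Ob v)" using count_main[OF G wH] True by blast
      finally show ?thesis using xv True False unfolding Dfun_def by simp
    qed
  qed
qed

definition MeF :: "pattern set \<Rightarrow> msgV \<Rightarrow> msgE" where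
  "MeF \<H> Mv k m = (if k = 1 then enc (ks \<H>) (Dfun \<H> (image_mset (\<lambda>(a,b,c,d). c) m))
     else Mv (k-1) (image_mset (\<lambda>(hv,hu,xe,e). (drop (length (ks \<H>)) hv, drop (length (ks \<H>)) hu,
        dec (ks \<H>) (take (length (ks \<H>)) hv), dec (ks \<H>) (take (length (ks \<H>)) hu), e)) m))"

definition UPeF :: "pattern set \<Rightarrow> nat \<Rightarrow> upd \<Rightarrow> upd" where
  "UPeF \<H> T UPv k h msg = (if k = 1 then msg @ h else
     (if k = Suc T then [] else take (length (ks \<H>)) h) @ UPv (k-1) (drop (length (ks \<H>)) h) msg)"

lemma sim_base:
  assumes HH: "substructure_collection \<H>" and G: "wf_graph G" and v: "v \<in> verts G"
  shows "gsne_state \<H> (MeF \<H> Mv) (UPeF \<H> T UPv) G (Suc 0) v = enc (ks \<H>) (xV \<H> G v) @ gsnv_state \<H> Mv UPv G 0 v"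
  using xV_decode[OF HH G v]
  by (simp add: MeF_def UPeF_def image_mset.compositionality comp_def)

lemma sim_step:
  assumes HH: "substructure_collection \<H>" and G: "wf_graph G" and v: "v \<in> verts G"
    and IH: "\<forall>u\<in>verts G. gsne_state \<H> (MeF \<H> Mv) (UPeF \<H> T UPv) G (Suc t) u = enc (ks \<H>) (xV \<H> G u) @ gsnv_state \<H> Mv UPv G t u"
  shows "gsne_state \<H> (MeF \<H> Mv) (UPeF \<H> T UPv) G (Suc (Suc t)) v =
     (if Suc (Suc t) = Suc T then [] else enc (ks \<H>) (xV \<H> G v)) @ gsnv_state \<H> Mv UPv G (Suc t) v"
proof -
  let ?l = "ks \<H>"
  let ?n = "length (ks \<H>)"
  let ?se = "gsne_state \<H> (MeF \<H> Mv) (UPeF \<H> T UPv) G (Suc t)"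
  let ?sv = "gsnv_state \<H> Mv UPv G t"
  have de: "\<And>w. dec ?l (enc ?l (xV \<H> G w)) = xV \<H> G w"
    by (rule dec_enc) (use xV_zero[OF ks_set[OF HH]] in blast)
  have fin: "finite (nbrs G v)" using finite_nbrs[OF G] .
  have "image_mset (\<lambda>(hv,hu,xe,e). (drop ?n hv, drop ?n hu, dec ?l (take ?n hv), dec ?l (take ?n hu), e))
          (image_mset (\<lambda>u. (?se v, ?se u, xE \<H> G u v, efeat G u v)) (mset_set (nbrs G v)))
      = image_mset (\<lambda>u. (?sv v, ?sv u, xV \<H> G v, xV \<H> G u, efeat G u v)) (mset_set (nbrs G v))"
    unfolding image_mset.compositionality
  proof (rule image_mset_cong)
    fix u assume "u \<in># mset_set (nbrs G v)"
    then have "u \<in> verts G" using fin nbrs_verts[OF G] by auto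
    then show "((\<lambda>(hv,hu,xe,e). (drop ?n hv, drop ?n hu, dec ?l (take ?n hv), dec ?l (take ?n hu), e)) \<circ>
         (\<lambda>u. (?se v, ?se u, xE \<H> G u v, efeat G u v))) u = (?sv v, ?sv u, xV \<H> G v, xV \<H> G u, efeat G u v)"
      using IH v de by simp
  qed
  then show ?thesis using IH v de
    by (simp add: MeF_def UPeF_def del: gsnv_state.simps(1) gsne_state.simps(1))
qed

lemma sim_inv:
  assumes HH: "substructure_collection \<H>" and G: "wf_graph G"
  shows "t < T \<Longrightarrow> \<forall>v\<in>verts G. gsne_state \<H> (MeF \<H> Mv) (UPeF \<H> T UPv) G (Suc t) v = enc (ks \<H>) (xV \<H> G v) @ gsnv_state \<H> Mv UPv G t v"
proof (induction t)
  case 0 then show ?case using sim_base[OF HH G] by blast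
next
  case (Suc t)
  then have "\<forall>v\<in>verts G. gsne_state \<H> (MeF \<H> Mv) (UPeF \<H> T UPv) G (Suc t) v = enc (ks \<H>) (xV \<H> G v) @ gsnv_state \<H> Mv UPv G t v"
    by simp
  then show ?case using sim_step[OF HH G] Suc.prems by auto
qed

lemma sim_final:
  assumes HH: "substructure_collection \<H>" and G: "wf_graph G" and v: "v \<in> verts G" and T: "T = Suc t"
  shows "gsne_state \<H> (MeF \<H> Mv) (UPeF \<H> T UPv) G (Suc T) v = gsnv_state \<H> Mv UPv G T v"
  using sim_step[OF HH G v sim_inv[OF HH G, of t T]] T by simp

lemma sim:
  assumes HH: "substructure_collection \<H>"
  shows "\<exists>T' Me UPe. \<forall>G. wf_graph G \<longrightarrow> (\<forall>v\<in>verts G. gsne_state \<H> Me UPe G T' v = gsnv_state \<H> Mv UPv G T v)"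
proof (cases T)
  case 0 then show ?thesis by (intro exI[of _ 0]) simp
next
  case (Suc t)
  show ?thesis
    by (rule exI[of _ "Suc T"], rule exI[of _ "MeF \<H> Mv"], rule exI[of _ "UPeF \<H> T UPv"])
      (use sim_final[OF HH _ _ Suc] in blast)
qed

theorem theorem3p3:
  assumes "substructure_collection \<H>"
  shows "CV_vertex \<H> \<subseteq> CE_vertex \<H> \<and> CV_graph \<H> \<subseteq> CE_graph \<H>"
proof
  show "CV_vertex \<H> \<subseteq> CE_vertex \<H>"
  proof
    fix F assume "F \<in> CV_vertex \<H>"
    then obtain T M UP where F: "\<forall>G. wf_graph G \<longrightarrow> (\<forall>v\<in>verts G. F G v = gsnv_state \<H> M UP G T v)"
      unfolding CV_vertex_def by blast
    obtain T' Me UPe where S: "\<forall>G. wf_graph G \<longrightarrow> (\<forall>v\<in>verts G. gsne_state \<H> Me UPe G T' v = gsnv_state \<H> M UP G T v)"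
      using sim[OF assms] by blast
    have "\<forall>G. wf_graph G \<longrightarrow> (\<forall>v\<in>verts G. F G v = gsne_state \<H> Me UPe G T' v)"
      using S F by simp
    then show "F \<in> CE_vertex \<H>" unfolding CE_vertex_def by blast
  qed
  show "CV_graph \<H> \<subseteq> CE_graph \<H>"
  proof
    fix F assume "F \<in> CV_graph \<H>"
    then obtain T M UP R where F: "\<forall>G. wf_graph G \<longrightarrow> F G = R (image_mset (gsnv_state \<H> M UP G T) (mset_set (verts G)))"
      unfolding CV_graph_def by blast
    obtain T' Me UPe where S: "\<forall>G. wf_graph G \<longrightarrow> (\<forall>v\<in>verts G. gsne_state \<H> Me UPe G T' v = gsnv_state \<H> M UP G T v)"
      using sim[OF assms] by blast
    have "\<forall>G. wf_graph G \<longrightarrow> F G = R (image_mset (gsne_state \<H> Me UPe G T') (mset_set (verts G)))"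
    proof (intro allI impI)
      fix G assume G: "wf_graph G"
      have "image_mset (gsne_state \<H> Me UPe G T') (mset_set (verts G)) = image_mset (gsnv_state \<H> M UP G T) (mset_set (verts G))"
        by (rule image_mset_cong) (use S G wfG[OF G] in auto)
      then show "F G = R (image_mset (gsne_state \<H> Me UPe G T') (mset_set (verts G)))" using F G by simp
    qed
    then show "F \<in> CE_graph \<H>" unfolding CE_graph_def by blast
  qed
qed

end
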